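(* Let $X=\{(u,v,w)\in\mathbb{R}^3:u\le0,\ v\le0,\ w\le 0,\ uv+w-1\le0\}$ with the Euclidean topology $\tau$ and the coordinatewise partial order $\preceq$. Then $(X,\tau,\preceq)$ is a locally compact, order-connected Hausdorff topological $\wedge$-semilattice, and the canonical map $x\mapsto x^\downarrow$ satisfies: (i) it topologically order-embeds $(X,\tau,\preceq)$ in $(C(X),\tau_F,\subseteq)$; (ii) as a map from $(X,\tau)$ to $(C^\downarrow(X),\tau_H)$ it is discontinuous at every point of $X$; (iii) as a map from $(X,\tau)$ to $(C^\downarrow(X),\tau_V)$ it is discontinuous at every point of $X\setminus\{(0,0,0)\}$ and continuous at $(0,0,0)$.
   Context: A partially ordered topological space is a topological space with a partial order whose graph is closed in the product; a topological $\wedge$-semilattice is one in which every pair has an infimum in $X$ and $\wedge:X\times X\to X$ is continuous. $x^\downarrow=\{u\in X:u\preceq x\}$, $x^\uparrow=\{u\in X:x\preceq u\}$ (inside $X$); order-connected means $x^\uparrow\cap y^\downarrow$ is connected whenever $x\preceq y$. $C(X)$ = closed subsets of $X$, $C^\downarrow(X)=\{x^\downarrow:x\in X\}$. Fell topology $\tau_F$: generated by $\{A:A\cap O\neq\emptyset\}$ ($O$ open) and $\{A:A\cap D=\emptyset\}$ ($D$ compact). Vietoris topology $\tau_V$: generated by $\{A:A\cap O\neq\emptyset\}$ ($O$ open) and $\{A:A\cap E=\emptyset\}$ ($E$ closed). $\tau_H$ is the topology induced by the (extended-valued) Hausdorff distance $H(A,B)=\max\{\sup_{a\in A}\inf_{b\in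 B}d(a,b),\ \sup_{b\in B}\inf_{a\in A}d(a,b)\}$, $d$ Euclidean metric. "Topologically order-embeds": $x\preceq y\iff x^\downarrow\subseteq y^\downarrow$ and $x\mapsto x^\downarrow$ is a homeomorphism onto $C^\downarrow(X)$ with the relative Fell topology. *)

theory Defs
  imports "HOL-Analysis.Analysis"
begin

text \<open>Points of R^3 are triples (u,v,w) :: real \<times> real \<times> real; the euclidean
  topology on this type is the product (= Euclidean) topology, its dist is the
  Euclidean metric, and the order (Product_Order) is the coordinatewise order.\<close>

definition Xset :: "(real \<times> real \<times> real) set" where
  "Xset = {(u,v,w). u \<le> 0 \<and> v \<le> 0 \<and> w \<le> 0 \<and> u * v + w - 1 \<le> 0}"

definition down_in :: "'a::ord set \<Rightarrow> 'a \<Rightarrow> 'a set" where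
  "down_in X x = {u \<in> X. u \<le> x}"

definition up_in :: "'a::ord set \<Rightarrow> 'a \<Rightarrow> 'a set" where
  "up_in X x = {u \<in> X. x \<le> u}"

definition pospace :: "'a::order topology \<Rightarrow> bool" where
  "pospace T \<longleftrightarrow> closedin (prod_topology T T)
      {(x,y). x \<in> topspace T \<and> y \<in> topspace T \<and> x \<le> y}"

definition is_inf_in :: "'a::ord set \<Rightarrow> 'a \<Rightarrow> 'a \<Rightarrow> 'a \<Rightarrow> bool" where
  "is_inf_in X x y z \<longleftrightarrow> z \<in> X \<and> z \<le> x \<and> z \<le> y \<and>
      (\<forall>w\<in>X. w \<le> x \<and> w \<le> y \<longrightarrow> w \<le> z)"

definition meet_in :: "'a::ord set \<Rightarrow> 'a \<Rightarrow> 'a \<Rightarrow> 'a" where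
  "meet_in X x y = (THE z. is_inf_in X x y z)"

definition top_meet_semilattice :: "'a::order topology \<Rightarrow> bool" where
  "top_meet_semilattice T \<longleftrightarrow>
     pospace T \<and>
     (\<forall>x\<in>topspace T. \<forall>y\<in>topspace T. \<exists>z. is_inf_in (topspace T) x y z) \<and>
     continuous_map (prod_topology T T) T (\<lambda>(x,y). meet_in (topspace T) x y)"

definition order_connected :: "'a::order topology \<Rightarrow> bool" where
  "order_connected T \<longleftrightarrow>
     (\<forall>x\<in>topspace T. \<forall>y\<in>topspace T. x \<le> y \<longrightarrow>
        connectedin T (up_in (topspace T) x \<inter> down_in (topspace T) y))"

definition closed_sets :: "'a topology \<Rightarrow> 'a set set" where
  "closed_sets T = {A. closedin T A}"

definition down_sets :: "'a::ord topology \<Rightarrow> 'a set set" where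
  "down_sets T = down_in (topspace T) ` topspace T"

definition fell_topology :: "'a topology \<Rightarrow> 'a set topology" where
  "fell_topology T = topology_generated_by
     ({{A \<in> closed_sets T. A \<inter> V \<noteq> {}} | V. openin T V} \<union>
      {{A \<in> closed_sets T. A \<inter> D = {}} | D. compactin T D})"

definition vietoris_topology :: "'a topology \<Rightarrow> 'a set topology" where
  "vietoris_topology T = topology_generated_by
     ({{A \<in> closed_sets T. A \<inter> V \<noteq> {}} | V. openin T V} \<union>
      {{A \<in> closed_sets T. A \<inter> E = {}} | E. closedin T E})"

definition ext_hausdist :: "'a::metric_space set \<Rightarrow> 'a set \<Rightarrow> ereal" where
  "ext_hausdist A B = max (SUP a\<in>A. INF b\<in>B. ereal (dist a b))
                          (SUP b\<in>B. INF a\<in>A. ereal (dist a b))"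

definition hausdorff_topology :: "'a::metric_space set set \<Rightarrow> 'a set topology" where
  "hausdorff_topology \<C> = topology (\<lambda>U. U \<subseteq> \<C> \<and>
     (\<forall>A\<in>U. \<exists>e>0. \<forall>B\<in>\<C>. ext_hausdist A B < ereal e \<longrightarrow> B \<in> U))"

definition continuous_at_pt :: "'a topology \<Rightarrow> 'b topology \<Rightarrow> ('a \<Rightarrow> 'b) \<Rightarrow> 'a \<Rightarrow> bool" where
  "continuous_at_pt T S f x \<longleftrightarrow> x \<in> topspace T \<and> f x \<in> topspace S \<and>
     (\<forall>V. openin S V \<and> f x \<in> V \<longrightarrow> (\<exists>U. openin T U \<and> x \<in> U \<and> f ` U \<subseteq> V))"

end

theory Submission
  imports Defs
begin


lemma Xset_alt: "Xset = {p. fst p \<le> 0} \<inter> {p. fst (snd p) \<le> 0} \<inter> {p. snd (snd p) \<le> 0}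
   \<inter> {p. fst p * fst (snd p) + snd (snd p) \<le> 1}"
  by (auto simp: Xset_def)

lemma closed_Xset: "closed Xset"
  unfolding Xset_alt
  by (intro closed_Int closed_Collect_le continuous_intros)

lemma mem_Xset[simp]: "(u,v,w) \<in> Xset \<longleftrightarrow> u \<le> 0 \<and> v \<le> 0 \<and> w \<le> 0 \<and> u * v + w \<le> 1"
  by (auto simp: Xset_def)

lemma le_triple[simp]: "((a::real,b::real,c::real) \<le> (a',b',c')) \<longleftrightarrow> a \<le> a' \<and> b \<le> b' \<and> c \<le> c'"
  by (simp add: less_eq_prod_def)

lemma dist_triple_le: "dist ((a::real),(b::real),(c::real)) (a',b',c') \<le> \<bar>a-a'\<bar> + \<bar>b-b'\<bar> + \<bar>c-c'\<bar>"
proof -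
  have "dist (a,b,c) (a',b',c') \<le> dist (a,b,c) (a',b,c) + dist (a',b,c) (a',b',c')" by (rule dist_triangle)
  also have "dist (a',b,c) (a',b',c') \<le> dist (a',b,c) (a',b',c) + dist (a',b',c) (a',b',c')" by (rule dist_triangle)
  finally show ?thesis by (simp add: dist_Pair_Pair dist_real_def)
qed

lemma dist_triple_ge: 
  "\<bar>a-a'\<bar> \<le> dist ((a::real),(b::real),(c::real)) (a',b',c')"
  "\<bar>b-b'\<bar> \<le> dist ((a::real),(b::real),(c::real)) (a',b',c')"
  "\<bar>c-c'\<bar> \<le> dist ((a::real),(b::real),(c::real)) (a',b',c')"
  using dist_fst_le[of "(a,b,c)" "(a',b',c')"] dist_snd_le[of "(a,b,c)" "(a',b',c')"]
   dist_fst_le[of "(b,c)" "(b',c')"] dist_snd_le[of "(b,c)" "(b',c')"]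
  by (auto simp: dist_real_def)

lemma neg_mult_mono: "(a::real) \<le> u \<Longrightarrow> u \<le> 0 \<Longrightarrow> b \<le> v \<Longrightarrow> v \<le> 0 \<Longrightarrow> u * v \<le> a * b"
proof -
  assume h: "a \<le> u" "u \<le> 0" "b \<le> v" "v \<le> 0"
  have "(-u) * (-v) \<le> (-a) * (-b)" by (rule mult_mono) (use h in auto)
  then show ?thesis by simp
qed

lemma lc: "locally_compact_space (subtopology euclidean Xset)"
  by (simp add: closed_Xset locally_compact_space_closed_subset locally_compact_space_euclidean)

lemma hs: "Hausdorff_space (subtopology euclidean Xset)"
  by (simp add: Hausdorff_space_subtopology)


lemma oc_set:
  assumes x: "(a,b,c) \<in> Xset" and y: "(a',b',c') \<in> Xset" and le: "(a,b,c) \<le> (a',b',c')"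
  shows "connected {z \<in> Xset. (a,b,c) \<le> z \<and> z \<le> (a',b',c')}"
proof -
  let ?S = "{z \<in> Xset. (a,b,c) \<le> z \<and> z \<le> (a',b',c')}"
  let ?B = "{a..a'} \<times> {b..b'} \<times> {c}"
  define P where "P z = ?B \<union> ({fst z} \<times> {fst (snd z)} \<times> {c..snd (snd z)})" for z :: "real \<times> real \<times> real"
  have conn: "connected (P z)" if "z \<in> ?S" for z
  proof -
    obtain u v w where z: "z = (u,v,w)" by (cases z) auto
    have "connected ?B" by (intro convex_connected convex_Times convex_real_interval convex_singleton)
    moreover have "connected ({u} \<times> {v} \<times> {c..w})" by (intro convex_connected convex_Times convex_real_interval convex_singleton)
    moreover have "(u,v,c) \<in> ?B" "(u,v,c) \<in> {u} \<times> {v} \<times> {c..w}" using that z by auto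
    ultimately show ?thesis unfolding P_def z fst_conv snd_conv by (intro connected_Un) blast+
  qed
  have BS: "?B \<subseteq> ?S"
  proof
    fix p assume "p \<in> ?B"
    then obtain u v where p: "p = (u,v,c)" "a \<le> u" "u \<le> a'" "b \<le> v" "v \<le> b'" by auto
    have "u * v \<le> a * b" using p y by (intro neg_mult_mono) auto
    then show "p \<in> ?S" using p x y le by auto
  qed
  have "?S = \<Union>(P ` ?S)"
  proof
    show "?S \<subseteq> \<Union>(P ` ?S)"
    proof
      fix z assume "z \<in> ?S"
      then show "z \<in> \<Union>(P ` ?S)" by (cases z) (force simp: P_def)
    qed
    show "\<Union>(P ` ?S) \<subseteq> ?S"
    proof
      fix p assume "p \<in> \<Union>(P ` ?S)"
      then obtain z where z: "z \<in> ?S" "p \<in> P z" by auto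
      obtain u v w where zz: "z = (u,v,w)" by (cases z) auto
      show "p \<in> ?S"
      proof (cases "p \<in> ?B")
        case True then show ?thesis using BS by auto
      next
        case False
        then obtain t where p: "p = (u,v,t)" "c \<le> t" "t \<le> w" using z zz by (auto simp: P_def)
        then show ?thesis using z zz by auto
      qed
    qed
  qed
  moreover have "connected (\<Union>(P ` ?S))"
  proof (rule connected_Union)
    show "\<And>s. s \<in> P ` ?S \<Longrightarrow> connected s" using conn by auto
    have "(a,b,c) \<in> \<Inter>(P ` ?S)" using le by (auto simp: P_def)
    then show "\<Inter>(P ` ?S) \<noteq> {}" by blast
  qed
  ultimately show ?thesis by simp
qed

lemma order_conn: "order_connected (subtopology euclidean Xset)"
  unfolding order_connected_def
proof (intro ballI impI)
  fix x y assume x: "x \<in> topspace (top_of_set Xset)" and y: "y \<in> topspace (top_of_set Xset)" and "x \<le> y"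
  obtain a b c where xx: "x = (a,b,c)" by (cases x) auto
  obtain a' b' c' where yy: "y = (a',b',c')" by (cases y) auto
  have "up_in Xset x \<inter> down_in Xset y = {z \<in> Xset. (a,b,c) \<le> z \<and> z \<le> (a',b',c')}"
    by (auto simp: up_in_def down_in_def xx yy)
  moreover have "connected {z \<in> Xset. (a,b,c) \<le> z \<and> z \<le> (a',b',c')}"
    using x y \<open>x \<le> y\<close> xx yy by (intro oc_set) auto
  ultimately show "connectedin (top_of_set Xset) (up_in (topspace (top_of_set Xset)) x \<inter> down_in (topspace (top_of_set Xset)) y)"
    by (simp add: connectedin_subtopology)
qed


definition mt :: "(real\<times>real\<times>real) \<Rightarrow> (real\<times>real\<times>real) \<Rightarrow> (real\<times>real\<times>real)" where
  "mt x y = (min (fst x) (fst y), min (fst (snd x)) (fst (snd y)),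
      min (min (snd (snd x)) (snd (snd y))) (1 - min (fst x) (fst y) * min (fst (snd x)) (fst (snd y))))"

lemma mt_inf: assumes "x \<in> Xset" "y \<in> Xset" shows "is_inf_in Xset x y (mt x y)"
proof -
  obtain a b c where x: "x = (a,b,c)" by (cases x) auto
  obtain a' b' c' where y: "y = (a',b',c')" by (cases y) auto
  have in1: "mt x y \<in> Xset" using assms by (auto simp: x y mt_def)
  have "w \<le> mt x y" if w: "w \<in> Xset" "w \<le> x" "w \<le> y" for w
  proof -
    obtain u v t where ww: "w = (u,v,t)" by (cases w) auto
    have h: "u \<le> min a a'" "v \<le> min b b'" "t \<le> min c c'" "u \<le> 0" "v \<le> 0" "u * v + t \<le> 1"
      using w by (auto simp: ww x y)
    have "min a a' * min b b' \<le> u * v"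
      using h assms by (intro neg_mult_mono[where a=u and b=v]) (auto simp: x y)
    then show ?thesis using h by (auto simp: ww mt_def x y)
  qed
  moreover have "mt x y \<le> x" "mt x y \<le> y" by (simp_all add: mt_def x y)
  ultimately show ?thesis using in1 unfolding is_inf_in_def by blast
qed

lemma meet_in_eq: assumes "x \<in> Xset" "y \<in> Xset" shows "meet_in Xset x y = mt x y"
  unfolding meet_in_def
proof (rule the_equality)
  show "is_inf_in Xset x y (mt x y)" using mt_inf assms .
  fix z assume "is_inf_in Xset x y z"
  then show "z = mt x y" using mt_inf[OF assms]
    unfolding is_inf_in_def by (meson order_antisym)
qed

lemma pospace_X: "pospace (subtopology euclidean Xset)"
  unfolding pospace_def
proof -
  have cl: "closed {p :: (real\<times>real\<times>real)\<times>(real\<times>real\<times>real). fst p \<le> snd p}"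
  proof -
    have "{p :: (real\<times>real\<times>real)\<times>(real\<times>real\<times>real). fst p \<le> snd p} =
       {p. fst (fst p) \<le> fst (snd p)} \<inter> {p. fst (snd (fst p)) \<le> fst (snd (snd p))} \<inter> {p. snd (snd (fst p)) \<le> snd (snd (snd p))}"
      by (auto simp: less_eq_prod_def)
    also have "closed \<dots>" by (intro closed_Int closed_Collect_le continuous_intros)
    finally show ?thesis .
  qed
  have "{(x, y). x \<in> Xset \<and> y \<in> Xset \<and> x \<le> y} = (Xset \<times> Xset) \<inter> {p. fst p \<le> snd p}" by auto
  then show "closedin (prod_topology (top_of_set Xset) (top_of_set Xset))
     {(x, y). x \<in> topspace (top_of_set Xset) \<and> y \<in> topspace (top_of_set Xset) \<and> x \<le> y}"
    using cl by (auto simp: closedin_closed)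
qed

lemma tms: "top_meet_semilattice (subtopology euclidean Xset)"
  unfolding top_meet_semilattice_def
proof (intro conjI ballI)
  show "pospace (top_of_set Xset)" by (rule pospace_X)
  fix x y assume "x \<in> topspace (top_of_set Xset)" "y \<in> topspace (top_of_set Xset)"
  then show "\<exists>z. is_inf_in (topspace (top_of_set Xset)) x y z" using mt_inf by (intro exI[of _ "mt x y"]) auto
next
  have c: "continuous_on UNIV (\<lambda>p. mt (fst p) (snd p))"
    unfolding mt_def by (intro continuous_intros)
  have "continuous_map (top_of_set (Xset \<times> Xset)) (top_of_set Xset) (\<lambda>p. mt (fst p) (snd p))"
    unfolding continuous_map_in_subtopology
    using continuous_on_subset[OF c]
    by (auto simp: mt_inf[unfolded is_inf_in_def])
  then show "continuous_map (prod_topology (top_of_set Xset) (top_of_set Xset)) (top_of_set Xset)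
     (\<lambda>(x, y). meet_in (topspace (top_of_set Xset)) x y)"
    unfolding prod_topology_subtopology_eu
    by (rule continuous_map_eq) (auto simp: meet_in_eq)
qed


lemma hit_lemma:
  assumes V: "openin (top_of_set Xset) V" and q: "(a,b,c) \<in> V"
  shows "\<exists>d>0. \<forall>y1 y2 y3. a - d \<le> y1 \<and> b - d \<le> y2 \<and> c - d \<le> y3 \<longrightarrow> (\<exists>q'\<in>V. q' \<le> (y1,y2,y3))"
proof -
  obtain e where e: "e > 0" "\<And>x'. x' \<in> Xset \<Longrightarrow> dist x' (a,b,c) < e \<Longrightarrow> x' \<in> V"
    using V q unfolding openin_euclidean_subtopology_iff by meson
  have qX: "(a,b,c) \<in> Xset" using V q openin_imp_subset by blast
  then have h: "a \<le> 0" "b \<le> 0" "c \<le> 0" "a * b + c \<le> 1" by auto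
  define M where "M = \<bar>a\<bar> + \<bar>b\<bar> + 2"
  define d where "d = min 1 (e / (2 * (M + 2)))"
  have M: "M \<ge> 2" by (simp add: M_def)
  have d: "d > 0" "d \<le> 1" "d \<le> e / (2 * (M + 2))" using e M by (auto simp: d_def)
  let ?q = "(a - d, b - d, c - M * d)"
  have "?q \<in> Xset"
  proof -
    have "(a - d) * (b - d) = a * b + d * (-a) + d * (-b) + d * d" by (simp add: algebra_simps)
    also have "d * d \<le> d * 1" using d by (intro mult_left_mono) auto
    finally have "(a - d) * (b - d) + (c - M * d) \<le> a * b + c + d * (-a - b + 1 - M)"
      by (simp add: algebra_simps)
    also have "d * (-a - b + 1 - M) \<le> 0" using d h by (intro mult_nonneg_nonpos) (auto simp: M_def)
    moreover have "c - M * d \<le> 0" using M d h by (smt (verit) mult_nonneg_nonneg)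
    ultimately show ?thesis using h d M unfolding mem_Xset by (intro conjI; linarith)
  qed
  moreover have "dist ?q (a,b,c) < e"
  proof -
    have "dist ?q (a,b,c) \<le> \<bar>a - d - a\<bar> + \<bar>b - d - b\<bar> + \<bar>c - M * d - c\<bar>" by (rule dist_triple_le)
    also have "\<dots> = (M + 2) * d" using d M by (simp add: algebra_simps abs_mult)
    also have "\<dots> \<le> (M + 2) * (e / (2 * (M + 2)))" using d M by (intro mult_left_mono) auto
    also have "\<dots> = e / 2" using M by (simp add: field_simps)
    finally show ?thesis using e by auto
  qed
  ultimately have qV: "?q \<in> V" using e by blast
  show ?thesis
  proof (intro exI conjI allI impI)
    show "d > 0" by fact
    fix y1 y2 y3 assume "a - d \<le> y1 \<and> b - d \<le> y2 \<and> c - d \<le> y3"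
    moreover have "M * d \<ge> 1 * d" using M d by (intro mult_right_mono) auto
    ultimately show "\<exists>q'\<in>V. q' \<le> (y1, y2, y3)" using qV by (intro bexI[of _ ?q]) auto
  qed
qed


abbreviation "TX \<equiv> top_of_set Xset"

lemma down_closed: "closedin TX (down_in Xset x)"
proof -
  obtain a b c where x: "x = (a,b,c)" by (cases x) auto
  have "down_in Xset x = Xset \<inter> ({p. fst p \<le> a} \<inter> {p. fst (snd p) \<le> b} \<inter> {p. snd (snd p) \<le> c})"
    by (auto simp: down_in_def x less_eq_prod_def)
  moreover have "closed ({p::real\<times>real\<times>real. fst p \<le> a} \<inter> {p. fst (snd p) \<le> b} \<inter> {p. snd (snd p) \<le> c})"
    by (intro closed_Int closed_Collect_le continuous_intros)
  ultimately show ?thesis by (auto simp: closedin_closed)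
qed

lemma down_self: "x \<in> Xset \<Longrightarrow> x \<in> down_in Xset x"
  by (simp add: down_in_def)

lemma down_sets_eq: "down_sets TX = down_in Xset ` Xset"
  by (simp add: down_sets_def)

lemma topspace_vietoris: "topspace (vietoris_topology TX) = closed_sets TX"
  unfolding vietoris_topology_def topology_generated_by_topspace
proof
  show "closed_sets TX \<subseteq> \<Union> ({{A \<in> closed_sets TX. A \<inter> V \<noteq> {}} |V. openin TX V} \<union>
        {{A \<in> closed_sets TX. A \<inter> E = {}} |E. closedin TX E})"
  proof
    fix A assume "A \<in> closed_sets TX"
    then have "A \<in> {A \<in> closed_sets TX. A \<inter> {} = {}}" by auto
    then show "A \<in> \<Union> ({{A \<in> closed_sets TX. A \<inter> V \<noteq> {}} |V. openin TX V} \<union>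
        {{A \<in> closed_sets TX. A \<inter> E = {}} |E. closedin TX E})" by blast
  qed
qed auto

lemma topspace_fell: "topspace (fell_topology TX) = closed_sets TX"
  unfolding fell_topology_def topology_generated_by_topspace
proof
  show "closed_sets TX \<subseteq> \<Union> ({{A \<in> closed_sets TX. A \<inter> V \<noteq> {}} |V. openin TX V} \<union>
        {{A \<in> closed_sets TX. A \<inter> E = {}} |E. compactin TX E})"
  proof
    fix A assume "A \<in> closed_sets TX"
    then have "A \<in> {A \<in> closed_sets TX. A \<inter> {} = {}}" by auto
    then show "A \<in> \<Union> ({{A \<in> closed_sets TX. A \<inter> V \<noteq> {}} |V. openin TX V} \<union>
        {{A \<in> closed_sets TX. A \<inter> E = {}} |E. compactin TX E})" by blast
  qed
qed auto

lemma down_in_closed_sets: "down_in Xset x \<in> closed_sets TX"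
  using down_closed by (simp add: closed_sets_def)

lemma down_zero: "down_in Xset (0,0,0) = Xset"
  by (auto simp: down_in_def Xset_def less_eq_prod_def)

lemma viet_nbhd_zero:
  assumes "generate_topology_on ({{A \<in> closed_sets TX. A \<inter> V \<noteq> {}} |V. openin TX V} \<union>
        {{A \<in> closed_sets TX. A \<inter> E = {}} |E. closedin TX E}) W"
  shows "Xset \<in> W \<Longrightarrow> \<exists>d>0. \<forall>y\<in>Xset. (-d \<le> fst y \<and> -d \<le> fst (snd y) \<and> -d \<le> snd (snd y)) \<longrightarrow> down_in Xset y \<in> W"
  using assms
proof induction
  case Empty then show ?case by simp
next
  case (Int a b)
  then obtain d1 d2 where "d1 > 0" "d2 > 0" and
     "\<forall>y\<in>Xset. (-d1 \<le> fst y \<and> -d1 \<le> fst (snd y) \<and> -d1 \<le> snd (snd y)) \<longrightarrow> down_in Xset y \<in> a"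
     "\<forall>y\<in>Xset. (-d2 \<le> fst y \<and> -d2 \<le> fst (snd y) \<and> -d2 \<le> snd (snd y)) \<longrightarrow> down_in Xset y \<in> b"
    by auto
  note h = this
  show ?case
  proof (intro exI[of _ "min d1 d2"] conjI ballI impI)
    show "min d1 d2 > 0" using h by simp
    fix y assume y: "y \<in> Xset" "-min d1 d2 \<le> fst y \<and> -min d1 d2 \<le> fst (snd y) \<and> -min d1 d2 \<le> snd (snd y)"
    then have "-d1 \<le> fst y \<and> -d1 \<le> fst (snd y) \<and> -d1 \<le> snd (snd y)"
              "-d2 \<le> fst y \<and> -d2 \<le> fst (snd y) \<and> -d2 \<le> snd (snd y)" by linarith+
    then show "down_in Xset y \<in> a \<inter> b" using h(3,4) y(1) by blast
  qed
next
  case (UN K)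
  then obtain k where "k \<in> K" "Xset \<in> k" by auto
  with UN show ?case by blast
next
  case (Basis s)
  then consider (hit) V where "openin TX V" "s = {A \<in> closed_sets TX. A \<inter> V \<noteq> {}}"
    | (miss) E where "closedin TX E" "s = {A \<in> closed_sets TX. A \<inter> E = {}}" by blast
  then show ?case
  proof cases
    case hit
    then obtain q where q: "q \<in> V" using Basis by auto
    obtain a b c where qq: "q = (a,b,c)" by (cases q) auto
    have qX: "q \<in> Xset" using q hit(1) openin_imp_subset by blast
    obtain d where d: "d > 0" "\<forall>y1 y2 y3. a - d \<le> y1 \<and> b - d \<le> y2 \<and> c - d \<le> y3 \<longrightarrow> (\<exists>q'\<in>V. q' \<le> (y1,y2,y3))"
      using hit_lemma[OF hit(1) q[unfolded qq]] by blast
    show ?thesis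
    proof (intro exI[of _ d] conjI ballI impI)
      fix y assume y: "y \<in> Xset" "-d \<le> fst y \<and> -d \<le> fst (snd y) \<and> -d \<le> snd (snd y)"
      obtain y1 y2 y3 where yy: "y = (y1,y2,y3)" by (cases y) auto
      have "a - d \<le> y1 \<and> b - d \<le> y2 \<and> c - d \<le> y3" using y yy qX qq by auto
      then obtain q' where "q' \<in> V" "q' \<le> y" using d yy by blast
      moreover have "q' \<in> Xset" using \<open>q' \<in> V\<close> hit(1) openin_imp_subset by blast
      ultimately show "down_in Xset y \<in> s" using hit(2) down_in_closed_sets by (auto simp: down_in_def)
    qed (use d in auto)
  next
    case miss
    then have "E \<subseteq> Xset" using closedin_subset by force
    then have "E = {}" using Basis miss by blast
    then show ?thesis using miss down_in_closed_sets by (intro exI[of _ "1::real"] conjI ballI impI) (simp_all del: mem_Xset)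
  qed
qed


lemma close_coords: "dist x y < d \<Longrightarrow> \<bar>fst x - fst y\<bar> < d \<and> \<bar>fst (snd x) - fst (snd y)\<bar> < d \<and> \<bar>snd (snd x) - snd (snd y)\<bar> < d"
  using dist_fst_le[of x y] dist_snd_le[of x y] dist_fst_le[of "snd x" "snd y"] dist_snd_le[of "snd x" "snd y"]
  by (simp add: dist_real_def)

lemma viet_cont_zero:
  "continuous_at_pt TX (subtopology (vietoris_topology TX) (down_sets TX)) (down_in Xset) (0,0,0)"
  unfolding continuous_at_pt_def
proof (intro conjI allI impI)
  show "(0,0,0) \<in> topspace TX" by simp
  show "down_in Xset (0, 0, 0) \<in> topspace (subtopology (vietoris_topology TX) (down_sets TX))"
    using down_in_closed_sets by (simp add: topspace_vietoris down_sets_eq)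
  fix V assume V: "openin (subtopology (vietoris_topology TX) (down_sets TX)) V \<and> down_in Xset (0, 0, 0) \<in> V"
  then obtain W where W: "openin (vietoris_topology TX) W" "V = W \<inter> down_sets TX"
    unfolding openin_subtopology by blast
  have "Xset \<in> W" using V W down_zero by (simp del: mem_Xset)
  then obtain d where d: "d > 0" "\<forall>y\<in>Xset. (-d \<le> fst y \<and> -d \<le> fst (snd y) \<and> -d \<le> snd (snd y)) \<longrightarrow> down_in Xset y \<in> W"
    using viet_nbhd_zero[OF W(1)[unfolded vietoris_topology_def openin_topology_generated_by_iff]] by blast
  show "\<exists>U. openin TX U \<and> (0, 0, 0) \<in> U \<and> down_in Xset ` U \<subseteq> V"
  proof (intro exI conjI)
    show "openin TX (Xset \<inter> ball (0,0,0) d)" by (simp add: openin_open_Int)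
    show "(0,0,0) \<in> Xset \<inter> ball (0,0,0) d" using d by simp
    show "down_in Xset ` (Xset \<inter> ball (0,0,0) d) \<subseteq> V"
    proof
      fix B assume "B \<in> down_in Xset ` (Xset \<inter> ball (0,0,0) d)"
      then obtain y where y: "y \<in> Xset" "dist (0,0,0) y < d" "B = down_in Xset y" by auto
      obtain y1 y2 y3 where yy: "y = (y1,y2,y3)" by (cases y) auto
      have "\<bar>0 - y1\<bar> < d" "\<bar>0 - y2\<bar> < d" "\<bar>0 - y3\<bar> < d"
        using close_coords[OF y(2)] yy by simp_all
      then have "-d \<le> fst y \<and> -d \<le> fst (snd y) \<and> -d \<le> snd (snd y)" using yy by auto
      then have "down_in Xset y \<in> W" using d(2) y(1) by blast
      then show "B \<in> V" using W y by (simp add: down_sets_eq del: mem_Xset)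
    qed
  qed
qed


lemma viet_discont_gen:
  assumes x: "x \<in> Xset" and E: "closedin TX E" and dis: "down_in Xset x \<inter> E = {}"
    and near: "\<And>e. e > 0 \<Longrightarrow> \<exists>y\<in>Xset. dist y x < e \<and> down_in Xset y \<inter> E \<noteq> {}"
  shows "\<not> continuous_at_pt TX (subtopology (vietoris_topology TX) (down_sets TX)) (down_in Xset) x"
proof
  assume c: "continuous_at_pt TX (subtopology (vietoris_topology TX) (down_sets TX)) (down_in Xset) x"
  let ?W = "{A \<in> closed_sets TX. A \<inter> E = {}}"
  have "openin (vietoris_topology TX) ?W"
    unfolding vietoris_topology_def openin_topology_generated_by_iff
    by (rule generate_topology_on.Basis) (use E in blast)
  then have "openin (subtopology (vietoris_topology TX) (down_sets TX)) (?W \<inter> down_sets TX)"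
    unfolding openin_subtopology by blast
  moreover have "down_in Xset x \<in> ?W \<inter> down_sets TX"
    using dis down_in_closed_sets x by (simp add: down_sets_eq del: mem_Xset)
  ultimately obtain U where U: "openin TX U" "x \<in> U" "down_in Xset ` U \<subseteq> ?W \<inter> down_sets TX"
    using c unfolding continuous_at_pt_def by blast
  then obtain e where e: "e > 0" "\<And>y. y \<in> Xset \<Longrightarrow> dist y x < e \<Longrightarrow> y \<in> U"
    unfolding openin_euclidean_subtopology_iff by meson
  obtain y where y: "y \<in> Xset" "dist y x < e" "down_in Xset y \<inter> E \<noteq> {}" using near e(1) by blast
  then have "y \<in> U" using e by blast
  then have "down_in Xset y \<in> ?W" using U(3) by blast
  then show False using y(3) by blast
qed

lemma step_t: assumes "(s::real) < 0" "e > 0" shows "min (-s) (e/2) > 0" "min (-s) (e/2) < e" "s + min (-s) (e/2) \<le> 0"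
  using assms by auto

lemma inv_bound: assumes "(t::real) > 0" "v \<le> 1 - 1/t" shows "1 \<le> t * (1 - v)"
proof -
  have "1/t \<le> 1 - v" using assms(2) by argo
  then have "t * (1/t) \<le> t * (1 - v)" using assms by (intro mult_left_mono) auto
  then show ?thesis using assms by simp
qed

lemma caseA: assumes x: "(a,b,c) \<in> Xset" and a: "a < 0"
  shows "\<not> continuous_at_pt TX (subtopology (vietoris_topology TX) (down_sets TX)) (down_in Xset) (a,b,c)"
proof (rule viet_discont_gen[OF x])
  let ?E = "{p \<in> Xset. 1 \<le> (fst p - a) * (1 - fst (snd p))}"
  have "closed {p::real\<times>real\<times>real. 1 \<le> (fst p - a) * (1 - fst (snd p))}"
    by (intro closed_Collect_le continuous_intros)
  then show "closedin TX ?E" unfolding closedin_closed Collect_conj_eq by blast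
  show "down_in Xset (a,b,c) \<inter> ?E = {}"
  proof (rule ccontr)
    assume "down_in Xset (a,b,c) \<inter> ?E \<noteq> {}"
    then obtain u v w where p: "(u,v,w) \<in> Xset" "u \<le> a" "v \<le> b" "1 \<le> (u - a) * (1 - v)"
      by (auto simp: down_in_def simp del: mem_Xset)
    have "(u - a) * (1 - v) \<le> 0" using p x by (intro mult_nonpos_nonneg) auto
    then show False using p by linarith
  qed
  fix e :: real assume e: "e > 0"
  define t where "t = min (-a) (e/2)"
  have t: "t > 0" "t < e" "a + t \<le> 0" using step_t[OF a e] by (auto simp: t_def)
  define v where "v = min b (1 - 1/t)"
  define w where "w = min c (1 - (a + t) * v)"
  have hx: "a \<le> 0" "b \<le> 0" "c \<le> 0" "a * b + c \<le> 1" using x by auto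
  have "t * b \<le> 0" using t hx by (simp add: mult_nonneg_nonpos)
  then have "(a + t) * b \<le> a * b" by (simp add: algebra_simps)
  then have yX: "(a+t,b,c) \<in> Xset" using hx t by auto
  have vle: "v \<le> b" "v \<le> 1 - 1/t" by (auto simp: v_def)
  have pX: "(a+t, v, w) \<in> Xset" using hx t vle by (auto simp: w_def)
  have "1 \<le> t * (1 - v)" using inv_bound[OF t(1) vle(2)] .
  then have pE: "(a+t, v, w) \<in> ?E" using pX by auto
  have "(a+t, v, w) \<in> down_in Xset (a+t,b,c)" using pX vle by (auto simp: down_in_def w_def simp del: mem_Xset)
  moreover have "dist (a+t,b,c) (a,b,c) \<le> t"
    using dist_triple_le[of "a+t" b c a b c] t by simp
  then have "dist (a+t,b,c) (a,b,c) < e" using t by linarith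
  ultimately show "\<exists>y\<in>Xset. dist y (a, b, c) < e \<and> down_in Xset y \<inter> ?E \<noteq> {}"
    using yX pE by blast
qed

lemma caseB: assumes x: "(a,b,c) \<in> Xset" and b: "b < 0"
  shows "\<not> continuous_at_pt TX (subtopology (vietoris_topology TX) (down_sets TX)) (down_in Xset) (a,b,c)"
proof (rule viet_discont_gen[OF x])
  let ?E = "{p \<in> Xset. 1 \<le> (fst (snd p) - b) * (1 - fst p)}"
  have "closed {p::real\<times>real\<times>real. 1 \<le> (fst (snd p) - b) * (1 - fst p)}"
    by (intro closed_Collect_le continuous_intros)
  then show "closedin TX ?E" unfolding closedin_closed Collect_conj_eq by blast
  show "down_in Xset (a,b,c) \<inter> ?E = {}"
  proof (rule ccontr)
    assume "down_in Xset (a,b,c) \<inter> ?E \<noteq> {}"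
    then obtain u v w where p: "(u,v,w) \<in> Xset" "u \<le> a" "v \<le> b" "1 \<le> (v - b) * (1 - u)"
      by (auto simp: down_in_def simp del: mem_Xset)
    have "(v - b) * (1 - u) \<le> 0" using p x by (intro mult_nonpos_nonneg) auto
    then show False using p by linarith
  qed
  fix e :: real assume e: "e > 0"
  define t where "t = min (-b) (e/2)"
  have t: "t > 0" "t < e" "b + t \<le> 0" using step_t[OF b e] by (auto simp: t_def)
  define u where "u = min a (1 - 1/t)"
  define w where "w = min c (1 - u * (b + t))"
  have hx: "a \<le> 0" "b \<le> 0" "c \<le> 0" "a * b + c \<le> 1" using x by auto
  have "a * t \<le> 0" using t hx by (simp add: mult_nonpos_nonneg)
  then have "a * (b + t) \<le> a * b" by (simp add: algebra_simps)
  then have yX: "(a,b+t,c) \<in> Xset" using hx t by auto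
  have ule: "u \<le> a" "u \<le> 1 - 1/t" by (auto simp: u_def)
  have pX: "(u, b+t, w) \<in> Xset" using hx t ule by (auto simp: w_def)
  have "1 \<le> t * (1 - u)" using inv_bound[OF t(1) ule(2)] .
  then have pE: "(u, b+t, w) \<in> ?E" using pX by auto
  have "(u, b+t, w) \<in> down_in Xset (a,b+t,c)" using pX ule by (auto simp: down_in_def w_def simp del: mem_Xset)
  moreover have "dist (a,b+t,c) (a,b,c) \<le> t"
    using dist_triple_le[of a "b+t" c a b c] t by simp
  then have "dist (a,b+t,c) (a,b,c) < e" using t by linarith
  ultimately show "\<exists>y\<in>Xset. dist y (a, b, c) < e \<and> down_in Xset y \<inter> ?E \<noteq> {}"
    using yX pE by blast
qed

lemma caseC: assumes c: "c < 0"
  shows "\<not> continuous_at_pt TX (subtopology (vietoris_topology TX) (down_sets TX)) (down_in Xset) (0,0,c)"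
proof (rule viet_discont_gen)
  show x: "(0,0,c) \<in> Xset" using c by simp
  let ?E = "{p \<in> Xset. 1 \<le> (snd (snd p) - c) * (1 - fst p)}"
  have "closed {p::real\<times>real\<times>real. 1 \<le> (snd (snd p) - c) * (1 - fst p)}"
    by (intro closed_Collect_le continuous_intros)
  then show "closedin TX ?E" unfolding closedin_closed Collect_conj_eq by blast
  show "down_in Xset (0,0,c) \<inter> ?E = {}"
  proof (rule ccontr)
    assume "down_in Xset (0,0,c) \<inter> ?E \<noteq> {}"
    then obtain u v w where p: "(u,v,w) \<in> Xset" "u \<le> 0" "w \<le> c" "1 \<le> (w - c) * (1 - u)"
      by (auto simp: down_in_def simp del: mem_Xset)
    have "(w - c) * (1 - u) \<le> 0" using p by (intro mult_nonpos_nonneg) auto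
    then show False using p by linarith
  qed
  fix e :: real assume e: "e > 0"
  define t where "t = min (-c) (e/2)"
  have t: "t > 0" "t < e" "c + t \<le> 0" using step_t[OF c e] by (auto simp: t_def)
  define u where "u = min 0 (1 - 1/t)"
  have yX: "(0,0,c+t) \<in> Xset" using t by auto
  have ule: "u \<le> 0" "u \<le> 1 - 1/t" by (auto simp: u_def)
  have pX: "(u, 0, c+t) \<in> Xset" using t ule by auto
  have "1 \<le> t * (1 - u)" using inv_bound[OF t(1) ule(2)] .
  then have pE: "(u, 0, c+t) \<in> ?E" using pX by auto
  have "(u, 0, c+t) \<in> down_in Xset (0,0,c+t)" using pX ule by (auto simp: down_in_def simp del: mem_Xset)
  moreover have "dist (0::real,0::real,c+t) (0,0,c) \<le> t"
    using t by (simp add: dist_Pair_Pair dist_real_def)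
  then have "dist (0::real,0::real,c+t) (0,0,c) < e" using t by linarith
  ultimately show "\<exists>y\<in>Xset. dist y (0, 0, c) < e \<and> down_in Xset y \<inter> ?E \<noteq> {}"
    using yX pE by blast
qed

lemma viet_discont:
  assumes "x \<in> Xset - {(0,0,0)}"
  shows "\<not> continuous_at_pt TX (subtopology (vietoris_topology TX) (down_sets TX)) (down_in Xset) x"
proof -
  obtain a b c where xx: "x = (a,b,c)" by (cases x) auto
  have h: "(a,b,c) \<in> Xset" "(a,b,c) \<noteq> (0,0,0)" using assms xx by auto
  then have "a < 0 \<or> b < 0 \<or> (a = 0 \<and> b = 0 \<and> c < 0)" by auto
  then show ?thesis using caseA[OF h(1)] caseB[OF h(1)] caseC xx by auto
qed


lemma closed_nonneg: "closed {c::real\<times>real\<times>real. 0 \<le> c}"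
proof -
  have "{c::real\<times>real\<times>real. 0 \<le> c} = {c. 0 \<le> fst c} \<inter> {c. 0 \<le> fst (snd c)} \<inter> {c. 0 \<le> snd (snd c)}"
    by (auto simp: less_eq_prod_def)
  also have "closed \<dots>" by (intro closed_Int closed_Collect_le continuous_intros)
  finally show ?thesis .
qed

lemma closed_upset:
  assumes "compact D" shows "closed {x::real\<times>real\<times>real. \<exists>q\<in>D. q \<le> x}"
proof -
  have "{x::real\<times>real\<times>real. \<exists>q\<in>D. q \<le> x} = (\<Union>q\<in>D. \<Union>c\<in>{c. 0 \<le> c}. {q + c})"
  proof (intro equalityI subsetI)
    fix x assume "x \<in> {x::real\<times>real\<times>real. \<exists>q\<in>D. q \<le> x}"
    then obtain q where q: "q \<in> D" "q \<le> x" by auto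
    then have "0 \<le> x - q" "x = q + (x - q)" by (auto simp: less_eq_prod_def)
    then show "x \<in> (\<Union>q\<in>D. \<Union>c\<in>{c. 0 \<le> c}. {q + c})" using q by blast
  next
    fix x assume "x \<in> (\<Union>q\<in>D. \<Union>c\<in>{c. 0 \<le> c}. {q + c})"
    then obtain q c where "q \<in> D" "0 \<le> c" "x = q + c" by auto
    then have "q \<le> x" by (auto simp: less_eq_prod_def)
    then show "x \<in> {x::real\<times>real\<times>real. \<exists>q\<in>D. q \<le> x}" using \<open>q \<in> D\<close> by blast
  qed
  also have "closed \<dots>" by (rule compact_closed_sums[OF assms closed_nonneg])
  finally show ?thesis .
qed

lemma cont_gen:
  assumes "\<And>x. x \<in> topspace X \<Longrightarrow> f x \<in> \<Union>S"
    and "\<And>s. s \<in> S \<Longrightarrow> openin X {x\<in>topspace X. f x \<in> s}"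
  shows "continuous_map X (topology_generated_by S) f"
  unfolding continuous_map_def
proof (intro conjI allI impI)
  show "f \<in> topspace X \<rightarrow> topspace (topology_generated_by S)" using assms(1) by auto
  fix U assume "openin (topology_generated_by S) U"
  then have "generate_topology_on S U" by (simp add: openin_topology_generated_by_iff)
  then show "openin X {x \<in> topspace X. f x \<in> U}"
  proof induction
    case Empty then show ?case by simp
  next
    case (Int a b)
    have "{x \<in> topspace X. f x \<in> a \<inter> b} = {x \<in> topspace X. f x \<in> a} \<inter> {x \<in> topspace X. f x \<in> b}" by auto
    then show ?case using Int by auto
  next
    case (UN K)
    have "{x \<in> topspace X. f x \<in> \<Union>K} = (\<Union>k\<in>K. {x \<in> topspace X. f x \<in> k})" by auto
    then show ?case using UN by auto
  next
    case (Basis s) then show ?case using assms(2) by blast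
  qed
qed


lemma hit_open:
  assumes V: "openin TX V"
  shows "openin TX {x \<in> Xset. down_in Xset x \<inter> V \<noteq> {}}"
  unfolding openin_euclidean_subtopology_iff
proof (intro conjI ballI)
  show "{x \<in> Xset. down_in Xset x \<inter> V \<noteq> {}} \<subseteq> Xset" by blast
  fix x assume x: "x \<in> {x \<in> Xset. down_in Xset x \<inter> V \<noteq> {}}"
  then obtain q where q: "q \<in> V" "q \<le> x" by (auto simp: down_in_def)
  obtain a b c where qq: "q = (a,b,c)" by (cases q) auto
  obtain d where d: "d > 0" "\<forall>y1 y2 y3. a - d \<le> y1 \<and> b - d \<le> y2 \<and> c - d \<le> y3 \<longrightarrow> (\<exists>q'\<in>V. q' \<le> (y1,y2,y3))"
    using hit_lemma[OF V q(1)[unfolded qq]] by blast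
  show "\<exists>e>0. \<forall>x'\<in>Xset. dist x' x < e \<longrightarrow> x' \<in> {x \<in> Xset. down_in Xset x \<inter> V \<noteq> {}}"
  proof (intro exI conjI ballI impI)
    show "d > 0" by fact
    fix y assume y: "y \<in> Xset" "dist y x < d"
    obtain y1 y2 y3 where yy: "y = (y1,y2,y3)" by (cases y) auto
    obtain x1 x2 x3 where xx: "x = (x1,x2,x3)" by (cases x) auto
    have "\<bar>y1 - x1\<bar> < d" "\<bar>y2 - x2\<bar> < d" "\<bar>y3 - x3\<bar> < d" using close_coords[OF y(2)] xx yy by auto
    moreover have "a \<le> x1" "b \<le> x2" "c \<le> x3" using q(2) qq xx by auto
    ultimately have "a - d \<le> y1 \<and> b - d \<le> y2 \<and> c - d \<le> y3" by linarith
    then obtain q' where "q' \<in> V" "q' \<le> y" using d yy by blast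
    moreover have "q' \<in> Xset" using \<open>q' \<in> V\<close> V openin_imp_subset by blast
    ultimately show "y \<in> {x \<in> Xset. down_in Xset x \<inter> V \<noteq> {}}" using y(1) by (auto simp: down_in_def)
  qed
qed

lemma miss_open:
  assumes D: "compactin TX D"
  shows "openin TX {x \<in> Xset. down_in Xset x \<inter> D = {}}"
proof -
  have cD: "compact D" "D \<subseteq> Xset" using D by (auto simp: compactin_subtopology)
  have "{x \<in> Xset. down_in Xset x \<inter> D = {}} = Xset - (Xset \<inter> {x. \<exists>q\<in>D. q \<le> x})"
    using cD(2) by (auto simp: down_in_def)
  moreover have "closedin TX (Xset \<inter> {x. \<exists>q\<in>D. q \<le> x})"
    using closed_upset[OF cD(1)] by (auto simp: closedin_closed)
  ultimately show ?thesis by (simp add: openin_diff)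
qed

definition "FS = ({{A \<in> closed_sets TX. A \<inter> V \<noteq> {}} | V. openin TX V} \<union>
      {{A \<in> closed_sets TX. A \<inter> D = {}} | D. compactin TX D})"

lemma fell_eq: "fell_topology TX = topology_generated_by FS"
  by (simp add: fell_topology_def FS_def)

lemma fell_cont: "continuous_map TX (fell_topology TX) (down_in Xset)"
  unfolding fell_eq
proof (rule cont_gen)
  fix x assume "x \<in> topspace TX"
  then show "down_in Xset x \<in> \<Union>FS"
    using topspace_fell fell_eq down_in_closed_sets by auto
next
  fix s assume "s \<in> FS"
  then consider (hit) V where "openin TX V" "s = {A \<in> closed_sets TX. A \<inter> V \<noteq> {}}"
    | (miss) D where "compactin TX D" "s = {A \<in> closed_sets TX. A \<inter> D = {}}" unfolding FS_def by blast
  then show "openin TX {x \<in> topspace TX. down_in Xset x \<in> s}"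
  proof cases
    case hit
    then have "{x \<in> topspace TX. down_in Xset x \<in> s} = {x \<in> Xset. down_in Xset x \<inter> V \<noteq> {}}"
      using down_in_closed_sets by auto
    then show ?thesis using hit_open[OF hit(1)] by simp
  next
    case miss
    then have "{x \<in> topspace TX. down_in Xset x \<in> s} = {x \<in> Xset. down_in Xset x \<inter> D = {}}"
      using down_in_closed_sets by auto
    then show ?thesis using miss_open[OF miss(1)] by simp
  qed
qed



lemma compact_D:
  assumes "D \<subseteq> Xset \<inter> {p. a \<le> fst p \<and> b \<le> fst (snd p) \<and> c \<le> snd (snd p)}" "closed D"
  shows "compactin TX D"
proof -
  have "Xset \<inter> {p. a \<le> fst p \<and> b \<le> fst (snd p) \<and> c \<le> snd (snd p)} \<subseteq> {a..0} \<times> {b..0} \<times> {c..0}"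
    by (auto simp: Xset_def)
  moreover have "bounded ({a..0} \<times> {b..0} \<times> {c..0})" by (intro bounded_Times) auto
  ultimately have "bounded D" using assms(1) bounded_subset by blast
  then have "compact D" using assms(2) by (simp add: compact_eq_bounded_closed)
  then show ?thesis using assms(1) by (auto simp: compactin_subtopology)
qed

lemma fell_nbhd:
  assumes x: "x \<in> Xset" and e: "e > 0"
  shows "\<exists>W. openin (fell_topology TX) W \<and> down_in Xset x \<in> W \<and>
     (\<forall>y\<in>Xset. down_in Xset y \<in> W \<longrightarrow> dist y x < e)"
proof -
  obtain a b c where xx: "x = (a,b,c)" by (cases x) auto
  define d where "d = e / 4"
  have d: "d > 0" using e by (simp add: d_def)
  define V where "V = Xset \<inter> ball x d"
  define D1 where "D1 = Xset \<inter> {p. a - d \<le> fst p \<and> b - d \<le> fst (snd p) \<and> c - d \<le> snd (snd p) \<and> a + d \<le> fst p}"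
  define D2 where "D2 = Xset \<inter> {p. a - d \<le> fst p \<and> b - d \<le> fst (snd p) \<and> c - d \<le> snd (snd p) \<and> b + d \<le> fst (snd p)}"
  define D3 where "D3 = Xset \<inter> {p. a - d \<le> fst p \<and> b - d \<le> fst (snd p) \<and> c - d \<le> snd (snd p) \<and> c + d \<le> snd (snd p)}"
  have cl: "closed {p::real\<times>real\<times>real. a - d \<le> fst p \<and> b - d \<le> fst (snd p) \<and> c - d \<le> snd (snd p) \<and> a + d \<le> fst p}"
     "closed {p::real\<times>real\<times>real. a - d \<le> fst p \<and> b - d \<le> fst (snd p) \<and> c - d \<le> snd (snd p) \<and> b + d \<le> fst (snd p)}"
     "closed {p::real\<times>real\<times>real. a - d \<le> fst p \<and> b - d \<le> fst (snd p) \<and> c - d \<le> snd (snd p) \<and> c + d \<le> snd (snd p)}"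
    unfolding Collect_conj_eq by (intro closed_Int closed_Collect_le continuous_intros)+
  have cD: "compactin TX D1" "compactin TX D2" "compactin TX D3"
    unfolding D1_def D2_def D3_def using cl
    by (intro compact_D[where a="a-d" and b="b-d" and c="c-d"] closed_Int closed_Xset; blast)+
  have oV: "openin TX V" unfolding V_def by (simp add: openin_open_Int)
  define W where "W = {A \<in> closed_sets TX. A \<inter> V \<noteq> {}} \<inter> {A \<in> closed_sets TX. A \<inter> D1 = {}}
       \<inter> {A \<in> closed_sets TX. A \<inter> D2 = {}} \<inter> {A \<in> closed_sets TX. A \<inter> D3 = {}}"
  have "openin (fell_topology TX) W"
    unfolding fell_eq openin_topology_generated_by_iff W_def
    by (intro generate_topology_on.Int generate_topology_on.Basis; unfold FS_def; use oV cD in blast)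
  moreover have "down_in Xset x \<in> W"
  proof -
    have "x \<in> down_in Xset x \<inter> V" using x d by (auto simp: down_in_def V_def simp del: mem_Xset)
    moreover have "down_in Xset x \<inter> D1 = {}" "down_in Xset x \<inter> D2 = {}" "down_in Xset x \<inter> D3 = {}"
      using d by (auto simp: down_in_def D1_def D2_def D3_def xx less_eq_prod_def simp del: mem_Xset)
    ultimately show ?thesis using down_in_closed_sets by (auto simp: W_def)
  qed
  moreover have "dist y x < e" if y: "y \<in> Xset" "down_in Xset y \<in> W" for y
  proof -
    obtain y1 y2 y3 where yy: "y = (y1,y2,y3)" by (cases y) auto
    obtain q where q: "q \<in> V" "q \<le> y" using y(2) by (auto simp: W_def down_in_def)
    obtain q1 q2 q3 where qq: "q = (q1,q2,q3)" by (cases q) auto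
    have "dist x q < d" using q(1) by (simp add: V_def)
    then have "\<bar>a - q1\<bar> < d" "\<bar>b - q2\<bar> < d" "\<bar>c - q3\<bar> < d" using close_coords xx qq by fastforce+
    moreover have "q1 \<le> y1" "q2 \<le> y2" "q3 \<le> y3" using q(2) qq yy by auto
    ultimately have lo: "a - d \<le> y1" "b - d \<le> y2" "c - d \<le> y3" by linarith+
    have yd: "y \<in> down_in Xset y" using y(1) by (simp add: down_in_def)
    have "y \<notin> D1" "y \<notin> D2" "y \<notin> D3" using y(2) yd unfolding W_def by blast+
    then have "y1 < a + d" "y2 < b + d" "y3 < c + d" using lo y(1) yy unfolding D1_def D2_def D3_def by auto
    then have "\<bar>y1 - a\<bar> + \<bar>y2 - b\<bar> + \<bar>y3 - c\<bar> \<le> 3 * d" using lo by (simp add: abs_le_iff)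
    moreover have "dist y x \<le> \<bar>y1 - a\<bar> + \<bar>y2 - b\<bar> + \<bar>y3 - c\<bar>" using dist_triple_le[of y1 y2 y3 a b c] xx yy by simp
    ultimately show ?thesis using e d by (simp add: d_def)
  qed
  ultimately show ?thesis by blast
qed

lemma fell_open_map: "open_map TX (subtopology (fell_topology TX) (down_sets TX)) (down_in Xset)"
  unfolding open_map_def
proof (intro allI impI)
  fix U assume U: "openin TX U"
  have UX: "U \<subseteq> Xset" using U openin_imp_subset by blast
  show "openin (subtopology (fell_topology TX) (down_sets TX)) (down_in Xset ` U)"
  proof (subst openin_subopen, intro ballI)
    fix B assume "B \<in> down_in Xset ` U"
    then obtain x where x: "x \<in> U" "B = down_in Xset x" by auto
    obtain e where e: "e > 0" "\<And>y. y \<in> Xset \<Longrightarrow> dist y x < e \<Longrightarrow> y \<in> U"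
      using U x(1) unfolding openin_euclidean_subtopology_iff by meson
    obtain W where W: "openin (fell_topology TX) W" "down_in Xset x \<in> W"
       "\<forall>y\<in>Xset. down_in Xset y \<in> W \<longrightarrow> dist y x < e"
      using fell_nbhd[OF _ e(1)] x UX by blast
    show "\<exists>T. openin (subtopology (fell_topology TX) (down_sets TX)) T \<and> B \<in> T \<and> T \<subseteq> down_in Xset ` U"
    proof (intro exI conjI)
      show "openin (subtopology (fell_topology TX) (down_sets TX)) (W \<inter> down_sets TX)"
        using W(1) unfolding openin_subtopology by blast
      show "B \<in> W \<inter> down_sets TX" using W(2) x UX by (auto simp: down_sets_eq)
      show "W \<inter> down_sets TX \<subseteq> down_in Xset ` U"
      proof
        fix A assume "A \<in> W \<inter> down_sets TX"
        then obtain y where y: "y \<in> Xset" "A = down_in Xset y" "down_in Xset y \<in> W" by (auto simp: down_sets_eq)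
        then have "y \<in> U" using W(3) e(2) by blast
        then show "A \<in> down_in Xset ` U" using y by blast
      qed
    qed
  qed
qed

lemma fell_homeo: "homeomorphic_map TX (subtopology (fell_topology TX) (down_sets TX)) (down_in Xset)"
proof (rule bijective_open_imp_homeomorphic_map)
  show "continuous_map TX (subtopology (fell_topology TX) (down_sets TX)) (down_in Xset)"
    unfolding continuous_map_in_subtopology using fell_cont by (auto simp: down_sets_eq)
  show "open_map TX (subtopology (fell_topology TX) (down_sets TX)) (down_in Xset)" by (rule fell_open_map)
  show "down_in Xset ` topspace TX = topspace (subtopology (fell_topology TX) (down_sets TX))"
    using down_in_closed_sets by (auto simp: topspace_fell down_sets_eq)
  show "inj_on (down_in Xset) (topspace TX)"
  proof (rule inj_onI)
    fix x y assume "x \<in> topspace TX" "y \<in> topspace TX" "down_in Xset x = down_in Xset y"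
    then have "x \<in> down_in Xset y" "y \<in> down_in Xset x" by (auto simp: down_in_def)
    then show "x = y" by (auto simp: down_in_def)
  qed
qed


definition "HP C = (\<lambda>U. U \<subseteq> C \<and>
     (\<forall>A\<in>U. \<exists>e>0. \<forall>B\<in>C. ext_hausdist A B < ereal e \<longrightarrow> B \<in> U))"

lemma HP_istop: "istopology (HP C)"
  unfolding istopology_def HP_def
proof (intro conjI allI impI ballI)
  fix S T assume S: "S \<subseteq> C \<and> (\<forall>A\<in>S. \<exists>e>0. \<forall>B\<in>C. ext_hausdist A B < ereal e \<longrightarrow> B \<in> S)"
    and T: "T \<subseteq> C \<and> (\<forall>A\<in>T. \<exists>e>0. \<forall>B\<in>C. ext_hausdist A B < ereal e \<longrightarrow> B \<in> T)"
  show "S \<inter> T \<subseteq> C" using S by blast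
  fix A assume A: "A \<in> S \<inter> T"
  then obtain e1 e2 where e: "e1 > 0" "\<forall>B\<in>C. ext_hausdist A B < ereal e1 \<longrightarrow> B \<in> S"
    "e2 > 0" "\<forall>B\<in>C. ext_hausdist A B < ereal e2 \<longrightarrow> B \<in> T" using S T by blast
  show "\<exists>e>0. \<forall>B\<in>C. ext_hausdist A B < ereal e \<longrightarrow> B \<in> S \<inter> T"
  proof (intro exI[of _ "min e1 e2"] conjI ballI impI)
    show "min e1 e2 > 0" using e by simp
    fix B assume "B \<in> C" "ext_hausdist A B < ereal (min e1 e2)"
    moreover have "ereal (min e1 e2) \<le> ereal e1" "ereal (min e1 e2) \<le> ereal e2" by auto
    ultimately show "B \<in> S \<inter> T" using e by (meson IntI order_less_le_trans)
  qed
next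
  fix K assume K: "\<forall>S\<in>K. S \<subseteq> C \<and> (\<forall>A\<in>S. \<exists>e>0. \<forall>B\<in>C. ext_hausdist A B < ereal e \<longrightarrow> B \<in> S)"
  show "\<Union>K \<subseteq> C" using K by blast
  fix A assume "A \<in> \<Union>K"
  then obtain S where "S \<in> K" "A \<in> S" by blast
  then obtain e where "e > 0" "\<forall>B\<in>C. ext_hausdist A B < ereal e \<longrightarrow> B \<in> S" using K by meson
  then show "\<exists>e>0. \<forall>B\<in>C. ext_hausdist A B < ereal e \<longrightarrow> B \<in> \<Union>K" using \<open>S \<in> K\<close> by blast
qed

lemma openin_haus: "openin (hausdorff_topology C) U \<longleftrightarrow> HP C U"
  unfolding hausdorff_topology_def HP_def[symmetric] by (simp add: topology_inverse'[OF HP_istop])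

lemma hd_lt: assumes "ext_hausdist A B < ereal e" "q \<in> A" shows "\<exists>b\<in>B. dist q b < e"
proof -
  have "(SUP a\<in>A. INF b\<in>B. ereal (dist a b)) < ereal e" using assms(1) by (simp add: ext_hausdist_def)
  moreover have "(INF b\<in>B. ereal (dist q b)) \<le> (SUP a\<in>A. INF b\<in>B. ereal (dist a b))"
    using assms(2) by (rule SUP_upper)
  ultimately have "(INF b\<in>B. ereal (dist q b)) < ereal e" by (rule le_less_trans[rotated])
  then obtain b where "b \<in> B" "ereal (dist q b) < ereal e" by (auto simp: INF_less_iff)
  then show ?thesis by auto
qed

lemma le_coords: "dist x y \<le> d \<Longrightarrow> \<bar>fst x - fst y\<bar> \<le> d \<and> \<bar>fst (snd x) - fst (snd y)\<bar> \<le> d \<and> \<bar>snd (snd x) - snd (snd y)\<bar> \<le> d"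
  using dist_fst_le[of x y] dist_snd_le[of x y] dist_fst_le[of "snd x" "snd y"] dist_snd_le[of "snd x" "snd y"]
  by (simp add: dist_real_def)

lemma far_point:
  assumes x: "(a,b,c) \<in> Xset" and t: "t > 0" "t \<le> 1" and y: "(a-t, b-t, c') \<in> Xset"
  shows "\<exists>p\<in>down_in Xset (a,b,c). \<forall>q\<in>down_in Xset (a-t,b-t,c'). M < dist p q"
proof -
  have h: "a \<le> 0" "b \<le> 0" "c \<le> 0" "a * b + c \<le> 1" using x by auto
  define M' where "M' = max M 0"
  have M': "M' \<ge> 0" "M \<le> M'" by (auto simp: M'_def)
  define v where "v = min b (- (M' * (2 - a) + 2 - c) / t)"
  define w where "w = min c (1 - a * v)"
  have v: "v \<le> b" "v \<le> - (M' * (2 - a) + 2 - c) / t" by (auto simp: v_def)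
  have av: "a * v \<ge> 0" using h v by (simp add: mult_nonpos_nonpos)
  have pX: "(a, v, w) \<in> Xset" using h v by (auto simp: w_def)
  have wge: "w \<ge> c - a * v" using av h by (auto simp: w_def)
  have tv: "t * v \<le> - (M' * (2 - a) + 2 - c)"
  proof -
    have "t * v \<le> t * (- (M' * (2 - a) + 2 - c) / t)" using v t by (intro mult_left_mono) auto
    then show ?thesis using t by simp
  qed
  show ?thesis
  proof (intro bexI ballI)
    show "(a, v, w) \<in> down_in Xset (a, b, c)" using pX v by (auto simp: down_in_def w_def simp del: mem_Xset)
    fix q assume q: "q \<in> down_in Xset (a - t, b - t, c')"
    obtain u' v' w' where qq: "q = (u',v',w')" by (cases q) auto
    have hq: "u' \<le> a - t" "v' \<le> b - t" "w' \<le> 1 - u' * v'" "v' \<le> 0" using q qq by (auto simp: down_in_def)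
    show "M < dist (a, v, w) q"
    proof (rule ccontr)
      assume "\<not> M < dist (a, v, w) q"
      then have "dist (a, v, w) q \<le> M'" using M' by linarith
      then have d: "\<bar>v - v'\<bar> \<le> M'" "\<bar>w - w'\<bar> \<le> M'" using le_coords qq by fastforce+
      have "u' * v' \<ge> (a - t) * v'" using hq by (intro mult_right_mono_neg) auto
      then have w': "w' \<le> 1 - (a - t) * v'" using hq by linarith
      have n1: "a * (v' - v) \<ge> a * M'" using h d by (intro mult_left_mono_neg) auto
      have n2: "t * v' \<le> t * (v + M')" using t d by (intro mult_left_mono) auto
      have n3: "t * M' \<le> M'" using t M' by (simp add: mult_left_le_one_le)
      have dw: "w - w' \<le> M'" using d(2) by (simp add: abs_le_iff)
      have "w - w' \<ge> c - a * v - 1 + (a - t) * v'" using wge w' by linarith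
      moreover have "(a - t) * v' = a * (v' - v) + a * v - t * v'" by (simp add: algebra_simps)
      ultimately have e0: "w - w' \<ge> c - 1 + a * (v' - v) - t * v'" by linarith
      have e1: "c - 1 + a * M' - t * (v + M') \<le> M'" using e0 dw n1 n2 by linarith
      have e2: "t * (v + M') = t * v + t * M'" by (simp add: algebra_simps)
      have e3: "M' * (2 - a) = 2 * M' - a * M'" by (simp add: algebra_simps)
      have e4: "t * v \<le> - (2 * M' - a * M' + 2 - c)" using tv e3 by simp
      show False using e1 e2 e4 n3 by linarith
    qed
  qed
qed


lemma haus_discont:
  assumes x: "x \<in> Xset"
  shows "\<not> continuous_at_pt TX (hausdorff_topology (down_sets TX)) (down_in Xset) x"
proof
  assume cont: "continuous_at_pt TX (hausdorff_topology (down_sets TX)) (down_in Xset) x"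
  obtain a b c where xx: "x = (a,b,c)" by (cases x) auto
  have h: "a \<le> 0" "b \<le> 0" "c \<le> 0" "a * b + c \<le> 1" using x xx by auto
  define V where "V = {B \<in> down_sets TX. \<exists>M. \<forall>p\<in>down_in Xset x. \<exists>q\<in>B. dist p q \<le> M}"
  have "HP (down_sets TX) V"
    unfolding HP_def
  proof (intro conjI ballI)
    show "V \<subseteq> down_sets TX" by (auto simp: V_def)
    fix A assume A: "A \<in> V"
    then obtain M where M: "\<forall>p\<in>down_in Xset x. \<exists>q\<in>A. dist p q \<le> M" by (auto simp: V_def)
    show "\<exists>e>0. \<forall>B\<in>down_sets TX. ext_hausdist A B < ereal e \<longrightarrow> B \<in> V"
    proof (intro exI[of _ "1::real"] conjI ballI impI)
      fix B assume B: "B \<in> down_sets TX" "ext_hausdist A B < ereal 1"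
      have "\<forall>p\<in>down_in Xset x. \<exists>r\<in>B. dist p r \<le> M + 1"
      proof
        fix p assume "p \<in> down_in Xset x"
        then obtain q where q: "q \<in> A" "dist p q \<le> M" using M by blast
        obtain r where r: "r \<in> B" "dist q r < 1" using hd_lt[OF B(2) q(1)] by blast
        have "dist p r \<le> dist p q + dist q r" by (rule dist_triangle)
        then show "\<exists>r\<in>B. dist p r \<le> M + 1" using q r by (intro bexI[of _ r]) auto
      qed
      then show "B \<in> V" using B(1) unfolding V_def by blast
    qed simp
  qed
  then have oV: "openin (hausdorff_topology (down_sets TX)) V" by (simp add: openin_haus)
  have xV: "down_in Xset x \<in> V" unfolding V_def
  proof (intro CollectI conjI exI[of _ "0::real"] ballI bexI)
    show "down_in Xset x \<in> down_sets TX" using x by (simp add: down_sets_eq)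
  qed auto
  obtain U where U: "openin TX U" "x \<in> U" "down_in Xset ` U \<subseteq> V"
    using cont oV xV unfolding continuous_at_pt_def by blast
  obtain e where e: "e > 0" "\<And>y. y \<in> Xset \<Longrightarrow> dist y x < e \<Longrightarrow> y \<in> U"
    using U(1,2) unfolding openin_euclidean_subtopology_iff by meson
  define K where "K = 3 - a - b"
  have K: "K \<ge> 3" using h by (simp add: K_def)
  define t where "t = min 1 (e / (2 * K))"
  have t: "t > 0" "t \<le> 1" "t \<le> e / (2 * K)" using e K by (auto simp: t_def)
  define c' where "c' = min c (1 - (a - t) * (b - t))"
  have yX: "(a - t, b - t, c') \<in> Xset" using h t by (auto simp: c'_def)
  have "(a - t) * (b - t) = a * b + t * (- a - b) + t * t" by (simp add: algebra_simps)
  moreover have "t * t \<le> t * 1" using t by (intro mult_left_mono) auto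
  ultimately have ab: "(a - t) * (b - t) \<le> a * b + t * (- a - b + 1)" by (simp add: algebra_simps)
  have cc: "\<bar>c' - c\<bar> \<le> t * (- a - b + 1)"
    using ab h t by (auto simp: c'_def abs_if min_def mult_nonneg_nonneg)
  have "dist (a - t, b - t, c') (a, b, c) \<le> \<bar>a - t - a\<bar> + \<bar>b - t - b\<bar> + \<bar>c' - c\<bar>" by (rule dist_triple_le)
  also have "\<dots> \<le> t + t + t * (- a - b + 1)" using cc t by simp
  also have "\<dots> = t * K" by (simp add: K_def algebra_simps)
  also have "\<dots> \<le> e / (2 * K) * K" using t K by (intro mult_right_mono) auto
  also have "\<dots> = e / 2" using K by simp
  finally have "dist (a - t, b - t, c') x < e" using e xx by simp
  then have "(a - t, b - t, c') \<in> U" using e(2) yX by blast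
  then have "down_in Xset (a - t, b - t, c') \<in> V" using U(3) by blast
  then obtain M where M: "\<forall>p\<in>down_in Xset x. \<exists>q\<in>down_in Xset (a - t, b - t, c'). dist p q \<le> M"
    by (auto simp: V_def)
  obtain p where p: "p \<in> down_in Xset (a,b,c)" "\<forall>q\<in>down_in Xset (a-t,b-t,c'). M < dist p q"
    using far_point[OF x[unfolded xx] t(1,2) yX] by blast
  then show False using M xx by force
qed


theorem mainTheorem11:
  defines "T \<equiv> subtopology euclidean Xset"
  shows "locally_compact_space T \<and> Hausdorff_space T \<and> order_connected T
    \<and> top_meet_semilattice T
    \<and> (\<forall>x\<in>Xset. \<forall>y\<in>Xset. x \<le> y \<longleftrightarrow> down_in Xset x \<subseteq> down_in Xset y)
    \<and> homeomorphic_map T (subtopology (fell_topology T) (down_sets T)) (down_in Xset)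
    \<and> (\<forall>x\<in>Xset. \<not> continuous_at_pt T (hausdorff_topology (down_sets T)) (down_in Xset) x)
    \<and> (\<forall>x\<in>Xset - {(0,0,0)}.
          \<not> continuous_at_pt T (subtopology (vietoris_topology T) (down_sets T)) (down_in Xset) x)
    \<and> continuous_at_pt T (subtopology (vietoris_topology T) (down_sets T)) (down_in Xset) (0,0,0)"
  proof -
  have e: "T = TX" by (simp add: T_def)
  have ord: "\<forall>x\<in>Xset. \<forall>y\<in>Xset. x \<le> y \<longleftrightarrow> down_in Xset x \<subseteq> down_in Xset y"
  proof (intro ballI iffI)
    fix x y assume "x \<in> Xset" "y \<in> Xset" "x \<le> y"
    then show "down_in Xset x \<subseteq> down_in Xset y" by (auto simp: down_in_def intro: order_trans)
  next
    fix x y assume "x \<in> Xset" "y \<in> Xset" "down_in Xset x \<subseteq> down_in Xset y"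
    then show "x \<le> y" by (auto simp: down_in_def)
  qed
  show ?thesis unfolding e
    using lc hs order_conn tms ord fell_homeo haus_discont viet_discont viet_cont_zero by blast
qed

end
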